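(* Let $F=(f_1,\dots,f_q)^\top:\mathbb{R}^n\to\mathbb{R}^q$, let $Y\subseteq\mathbb{R}^n$ be a finite nonempty set, let $y\in\mathbb{R}^n$ and $\nu>0$. Let $f_{\min},f_{\max}\in\mathbb{R}^q$ satisfy $f_{\min}\le F(x)\le f_{\max}$ componentwise for all $x\in Y\cup\{y\}$, and let the reference point be $\rho=f_{\max}+s\mathbf{1}$ with $s\ge\max_{i=1,\dots,q}\big((f_{\max})_i-(f_{\min})_i\big)$ and $s>0$. If \[ F(y)\not> F(x)-\nu\mathbf{1}\qquad\text{for all } x\in Y, \] i.e. for every $x\in Y$ there is an index $\ell$ with $f_\ell(y)\le f_\ell(x)-\nu$, then \[ HI(F(Y\cup\{y\}))-HI(F(Y))\ge\nu^q . \]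
   Context: Vector order conventions for $u,v\in\mathbb{R}^q$: $u>v$ means $u_i>v_i$ for all $i$, and $u\not>v$ is its negation; $\le$ between vectors in the hypotheses means componentwise inequality. $\mathbf{1}$ denotes the all-ones vector in $\mathbb{R}^q$. For a set $Y\subseteq\mathbb{R}^n$, $F(Y)=\{F(x):x\in Y\}$. For a finite set $A\subset\mathbb{R}^q$ and a reference point $\rho\in\mathbb{R}^q$ with $a_i\le\rho_i$ for all $a\in A$ and all $i$, the hypervolume indicator is $HI(A)=\mathrm{vol}\big(\bigcup_{a\in A}[a,\rho]\big)$, where $[a,\rho]=\{w\in\mathbb{R}^q: a_i\le w_i\le\rho_i,\ i=1,\dots,q\}$ and $\mathrm{vol}$ is Lebesgue measure on $\mathbb{R}^q$. *)

theory Defs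
  imports "HOL-Analysis.Analysis"
begin

definition vec_gt :: "real^'q \<Rightarrow> real^'q \<Rightarrow> bool" where
  "vec_gt u v \<longleftrightarrow> (\<forall>i. u $ i > v $ i)"

definition HI :: "real^'q \<Rightarrow> (real^'q) set \<Rightarrow> real" where
  "HI rho A = measure lebesgue (\<Union>a\<in>A. cbox a rho)"

end

theory Submission
  imports Defs
begin

lemma box_measure_cart:
  fixes a :: "real^'q"
  assumes "v > 0"
  shows "measure lebesgue (box a (a + v *\<^sub>R 1)) = v ^ CARD('q)"
proof -
  have "measure lebesgue (box a (a + v *\<^sub>R 1)) = measure lborel (box a (a + v *\<^sub>R 1))"
    by (simp add: measure_completion)
  also have "\<dots> = measure lborel (cbox a (a + v *\<^sub>R 1))"
    unfolding measure_def by (simp only: emeasure_lborel_box_eq emeasure_lborel_cbox_eq)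
  also have "\<dots> = (\<Prod>i\<in>UNIV. (a + v *\<^sub>R 1) $ i - a $ i)"
    using assms by (intro content_cbox_cart) (auto simp: interval_ne_empty_cart)
  also have "\<dots> = v ^ CARD('q)" by simp
  finally show ?thesis .
qed

theorem proposition1:
  fixes F :: "real^'n \<Rightarrow> real^'q"
    and Y :: "(real^'n) set"
    and y :: "real^'n"
    and \<nu> s :: real
    and fmin fmax :: "real^'q"
  assumes "finite Y" and "Y \<noteq> {}"
    and "\<nu> > 0"
    and "\<And>x i. x \<in> Y \<union> {y} \<Longrightarrow> fmin $ i \<le> F x $ i \<and> F x $ i \<le> fmax $ i"
    and "\<And>i. s \<ge> fmax $ i - fmin $ i"
    and "s > 0"
    and "\<And>x. x \<in> Y \<Longrightarrow> \<not> vec_gt (F y) (F x - \<nu> *\<^sub>R (1::real^'q))"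
  shows "HI (fmax + s *\<^sub>R (1::real^'q)) (F ` (Y \<union> {y}))
           - HI (fmax + s *\<^sub>R (1::real^'q)) (F ` Y) \<ge> \<nu> ^ CARD('q)"
proof -
  define \<rho> where "\<rho> = fmax + s *\<^sub>R (1::real^'q)"
  define a where "a = F y"
  define U where "U = (\<Union>x\<in>Y. cbox (F x) \<rho>)"
  have ex: "\<exists>l. a $ l \<le> F x $ l - \<nu>" if "x \<in> Y" for x
    using assms(7)[OF that] unfolding vec_gt_def a_def by (auto simp: not_less)
  obtain x0 where x0: "x0 \<in> Y" using assms(2) by blast
  then obtain l where l: "a $ l \<le> F x0 $ l - \<nu>" using ex by blast
  have "\<nu> \<le> s"
    using l assms(4)[of x0 l] assms(4)[of y l] assms(5)[of l] x0 unfolding a_def by auto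
  have U: "U \<in> lmeasurable" unfolding U_def using assms(1) by (intro fmeasurable.finite_UN) auto
  have eq1: "HI \<rho> (F ` (Y \<union> {y})) = measure lebesgue (U \<union> cbox a \<rho>)"
    unfolding HI_def U_def a_def by (simp add: Un_commute)
  have eq2: "HI \<rho> (F ` Y) = measure lebesgue U" unfolding HI_def U_def by simp
  have "measure lebesgue (U \<union> cbox a \<rho>) = measure lebesgue U + measure lebesgue (cbox a \<rho> - U)"
    using U by (intro measure_Un2) auto
  moreover have "box a (a + \<nu> *\<^sub>R 1) \<subseteq> cbox a \<rho> - U"
  proof
    fix w assume w: "w \<in> box a (a + \<nu> *\<^sub>R 1)"
    have "w \<in> cbox a \<rho>"
      unfolding mem_box_cart
    proof
      fix i
      have "a $ i \<le> fmax $ i" using assms(4)[of y i] unfolding a_def by auto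
      then show "a $ i \<le> w $ i \<and> w $ i \<le> \<rho> $ i"
        using w \<open>\<nu> \<le> s\<close> unfolding mem_box_cart \<rho>_def by (auto intro: less_imp_le) (smt (verit) w mem_box_cart(1) vector_add_component vector_scaleR_component one_index)
    qed
    moreover have "w \<notin> U"
    proof
      assume "w \<in> U"
      then obtain x where x: "x \<in> Y" "w \<in> cbox (F x) \<rho>" unfolding U_def by blast
      obtain k where k: "a $ k \<le> F x $ k - \<nu>" using ex[OF x(1)] by blast
      have "w $ k < a $ k + \<nu>" using w unfolding mem_box_cart by auto
      moreover have "F x $ k \<le> w $ k" using x(2) unfolding mem_box_cart by auto
      ultimately show False using k by linarith
    qed
    ultimately show "w \<in> cbox a \<rho> - U" by blast
  qed
  then have "measure lebesgue (box a (a + \<nu> *\<^sub>R 1)) \<le> measure lebesgue (cbox a \<rho> - U)"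
    using U by (intro measure_mono_fmeasurable) auto
  ultimately show ?thesis
    using eq1 eq2 box_measure_cart[OF assms(3), of a] unfolding \<rho>_def by linarith
qed

end
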